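(* (a) For every metric space $(X,d)$, every Banach contraction $T: X\to X$ is a PA-contraction. (b) There exist a metric space $(X,d)$ and a mapping $T: X \to X$ that is a PA-contraction but not a Banach contraction. Consequently, the class of PA-contractions strictly contains the class of Banach contractions.
   Context: $T^0$ denotes the identity and $T^{k+1}=T\circ T^k$. A mapping $T: X\to X$ on a metric space $(X,d)$ is a Banach contraction if there exists $\beta\in(0,1)$ with $d(Tx,Ty)\le \beta\, d(x,y)$ for all $x,y\in X$. It is a PA-contraction if there exist $\alpha\in(0,1)$ and $N\in\mathbb{N}$ such that for all $x,y\in X$ and all $n\ge N$, $\sum_{k=0}^{n-1} d(T^{k+1}x, T^{k+1}y) \le \alpha \sum_{k=0}^{n-1} d(T^k x, T^k y)$. *)

theory Defs
  imports "HOL-Analysis.Abstract_Metric_Spaces"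
begin

definition banach_contraction :: "'a set \<Rightarrow> ('a \<Rightarrow> 'a \<Rightarrow> real) \<Rightarrow> ('a \<Rightarrow> 'a) \<Rightarrow> bool" where
  "banach_contraction X d T \<longleftrightarrow>
     (\<exists>\<beta>. 0 < \<beta> \<and> \<beta> < 1 \<and> (\<forall>x\<in>X. \<forall>y\<in>X. d (T x) (T y) \<le> \<beta> * d x y))"

definition PA_contraction :: "'a set \<Rightarrow> ('a \<Rightarrow> 'a \<Rightarrow> real) \<Rightarrow> ('a \<Rightarrow> 'a) \<Rightarrow> bool" where
  "PA_contraction X d T \<longleftrightarrow>
     (\<exists>\<alpha> (N::nat). 0 < \<alpha> \<and> \<alpha> < 1 \<and>
        (\<forall>x\<in>X. \<forall>y\<in>X. \<forall>n\<ge>N.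
           (\<Sum>k<n. d ((T ^^ (k+1)) x) ((T ^^ (k+1)) y)) \<le> \<alpha> * (\<Sum>k<n. d ((T ^^ k) x) ((T ^^ k) y))))"

end

theory Submission
  imports Defs
begin

lemma iter_in: "T ` X \<subseteq> X \<Longrightarrow> x \<in> X \<Longrightarrow> (T ^^ k) x \<in> X"
  by (induction k) auto

lemma partA:
  assumes "T ` X \<subseteq> X" "banach_contraction X d T"
  shows "PA_contraction X d T"
proof -
  obtain b where b: "0 < b" "b < 1" "\<forall>x\<in>X. \<forall>y\<in>X. d (T x) (T y) \<le> b * d x y"
    using assms(2) unfolding banach_contraction_def by blast
  show ?thesis unfolding PA_contraction_def
  proof (intro exI[of _ b] exI[of _ 0] conjI b(1,2) ballI allI impI)
    fix x y n assume xy: "x \<in> X" "y \<in> X"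
    have "(\<Sum>k<n. d ((T ^^ (k+1)) x) ((T ^^ (k+1)) y)) \<le> (\<Sum>k<n. b * d ((T ^^ k) x) ((T ^^ k) y))"
    proof (rule sum_mono)
      fix k
      show "d ((T ^^ (k+1)) x) ((T ^^ (k+1)) y) \<le> b * d ((T ^^ k) x) ((T ^^ k) y)"
        using b(3) iter_in[OF assms(1) xy(1), of k] iter_in[OF assms(1) xy(2), of k] by simp
    qed
    then show "(\<Sum>k<n. d ((T ^^ (k+1)) x) ((T ^^ (k+1)) y)) \<le> b * (\<Sum>k<n. d ((T ^^ k) x) ((T ^^ k) y))"
      by (simp add: sum_distrib_left)
  qed
qed

lemma sum2:
  assumes z: "\<forall>k\<ge>2. f k = (0::real)" and n: "2 \<le> (n::nat)"
  shows "(\<Sum>k<n. f k) = f 0 + f 1"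
  using n
proof (induction n rule: dec_induct)
  case base
  then show ?case by (simp add: numeral_2_eq_2)
next
  case (step n)
  then show ?case using z by simp
qed

definition TT :: "real \<Rightarrow> real" where "TT x = (if x = 0 then 1 else 3)"

lemma TT_iter: "k \<ge> 2 \<Longrightarrow> x \<in> {0,1,3} \<Longrightarrow> (TT ^^ k) x = 3"
proof (induction k rule: dec_induct)
  case base
  then show ?case by (auto simp: numeral_2_eq_2 TT_def)
next
  case (step n)
  then show ?case by (simp add: TT_def)
qed

lemma partB: "Metric_space {0,1,3::real} dist \<and> TT ` {0,1,3} \<subseteq> {0,1,3} \<and>
   PA_contraction {0,1,3} dist TT \<and> \<not> banach_contraction {0,1,3} dist TT"
proof (intro conjI)
  show "Metric_space {0,1,3::real} dist"
    unfolding Metric_space_def by (auto simp: dist_commute dist_triangle)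
  show "TT ` {0,1,3} \<subseteq> {0,1,3}" by (auto simp: TT_def)
  show "\<not> banach_contraction {0,1,3} dist TT"
  proof
    assume "banach_contraction {0,1,3} dist TT"
    then obtain b where "b < 1" "dist (TT 0) (TT 1) \<le> b * dist (0::real) 1"
      unfolding banach_contraction_def by blast
    then show False by (simp add: TT_def dist_real_def)
  qed
  show "PA_contraction {0,1,3} dist TT"
    unfolding PA_contraction_def
  proof (intro exI[of _ "3/4"] exI[of _ 2] conjI ballI allI impI)
    fix x y :: real and n :: nat assume xy: "x \<in> {0,1,3}" "y \<in> {0,1,3}" and n: "2 \<le> n"
    have z: "\<forall>k\<ge>2. dist ((TT ^^ k) x) ((TT ^^ k) y) = 0" using TT_iter xy by simp
    have z2: "\<forall>k\<ge>2. dist ((TT ^^ (k+1)) x) ((TT ^^ (k+1)) y) = 0" using TT_iter xy by simp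
    have e1: "(\<Sum>k<n. dist ((TT ^^ k) x) ((TT ^^ k) y)) = dist x y + dist (TT x) (TT y)"
      using sum2[OF z n] by simp
    have e2: "(\<Sum>k<n. dist ((TT ^^ (k+1)) x) ((TT ^^ (k+1)) y)) = dist (TT x) (TT y)"
      using sum2[OF z2 n] TT_iter[of 2 x] TT_iter[of 2 y] xy by (simp add: numeral_2_eq_2)
    have "dist (TT x) (TT y) \<le> 3/4 * (dist x y + dist (TT x) (TT y))"
      using xy by (auto simp: TT_def dist_real_def)
    then show "(\<Sum>k<n. dist ((TT ^^ (k+1)) x) ((TT ^^ (k+1)) y)) \<le> 3/4 * (\<Sum>k<n. dist ((TT ^^ k) x) ((TT ^^ k) y))"
      using e1 e2 by simp
  qed simp_all
qed

theorem theorem2: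
  shows "(\<forall>(X :: 'a set) d (T :: 'a \<Rightarrow> 'a).
            Metric_space X d \<and> T ` X \<subseteq> X \<and> banach_contraction X d T \<longrightarrow> PA_contraction X d T)
       \<and> (\<exists>(X :: real set) d (T :: real \<Rightarrow> real).
            Metric_space X d \<and> T ` X \<subseteq> X \<and> PA_contraction X d T \<and> \<not> banach_contraction X d T)"
  using partA partB by blast

end
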